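(* Let $m\in\mathbb N$ and $\eta\in\mathrm{Sqz}^m$. Let $\vec a$ be the column $(\hat a_1,\dots,\hat a_m,\hat a_1^*,\dots,\hat a_m^* )^t$ of operators on $\mathcal H^{\otimes m}$. Then $[\vec a,\hat s_\eta]=\eta\vec a$, meaning that for each $p\in\{1,\dots,2m\}$, \[(\vec a)_p\hat s_\eta-\hat s_\eta(\vec a)_p=\sum_{q=1}^{2m}\eta_{p,q}(\vec a)_q.\]
   Context: $\mathcal H=L^2(\mathbb R)$ and $\hat a=(\hat q+i\hat p)/\sqrt2$, with $(\hat qf)(x)=xf(x)$ and $(\hat pf)(x)=-if'(x)$, so that $[\hat a,\hat a^*]=\hat I$. On $\mathcal H^{\otimes m}$, $\hat a_i$ is $\hat a$ on factor $i$. $\mathrm{Sqz}^m$ is the set of matrices $\eta=\begin{pmatrix}A&S\\ \bar S&\bar A\end{pmatrix}$ with $A\in\mathbb C^{m\times m}$ anti-hermitian and $S\in\mathbb C^{m\times m}$ symmetric. Set \[\hat s_\eta=\sum_{i,j}\Big(A_{i,j}\hat a_i^*\hat a_j+\tfrac12S_{i,j}\hat a_i^*\hat a_j^*-\tfrac12\bar S_{i,j}\hat a_i\hat a_j\Big).\] *)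

theory Defs
  imports "HOL-Analysis.Analysis"
begin

text \<open>Model of H^{\<otimes>m} = L^2(R)^{\<otimes>m} = L^2(R^m): wave functions f :: real^'m \<Rightarrow> complex,
  factor i of the tensor product corresponds to coordinate i.  The operators are
  realised as differential operators acting on smooth functions (a common invariant core).\<close>

definition partial :: "'m::finite \<Rightarrow> (real^'m \<Rightarrow> complex) \<Rightarrow> real^'m \<Rightarrow> complex" where
  "partial i f x = vector_derivative (\<lambda>t. f (x + t *\<^sub>R axis i 1)) (at 0)"

fun iter_partial :: "'m::finite list \<Rightarrow> (real^'m \<Rightarrow> complex) \<Rightarrow> real^'m \<Rightarrow> complex" where
  "iter_partial [] f = f"
| "iter_partial (i # is) f = partial i (iter_partial is f)"

definition smooth_fun :: "(real^'m::finite \<Rightarrow> complex) \<Rightarrow> bool" where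
  "smooth_fun f \<longleftrightarrow> (\<forall>is x. iter_partial is f differentiable (at x))"

definition q_op :: "'m::finite \<Rightarrow> (real^'m \<Rightarrow> complex) \<Rightarrow> real^'m \<Rightarrow> complex" where
  "q_op i f = (\<lambda>x. complex_of_real (x $ i) * f x)"

definition p_op :: "'m::finite \<Rightarrow> (real^'m \<Rightarrow> complex) \<Rightarrow> real^'m \<Rightarrow> complex" where
  "p_op i f = (\<lambda>x. - \<i> * partial i f x)"

definition a_op :: "'m::finite \<Rightarrow> (real^'m \<Rightarrow> complex) \<Rightarrow> real^'m \<Rightarrow> complex" where
  "a_op i f = (\<lambda>x. (q_op i f x + \<i> * p_op i f x) / complex_of_real (sqrt 2))"

definition a_adj :: "'m::finite \<Rightarrow> (real^'m \<Rightarrow> complex) \<Rightarrow> real^'m \<Rightarrow> complex" where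
  "a_adj i f = (\<lambda>x. (q_op i f x - \<i> * p_op i f x) / complex_of_real (sqrt 2))"

text \<open>2m x 2m matrices indexed by 'm + 'm: Inl i is the i-th of the first m indices,
  Inr i the i-th of the last m indices.\<close>
definition sqz_block :: "('m \<Rightarrow> 'm \<Rightarrow> complex) \<Rightarrow> ('m \<Rightarrow> 'm \<Rightarrow> complex) \<Rightarrow> ('m + 'm) \<Rightarrow> ('m + 'm) \<Rightarrow> complex" where
  "sqz_block A S p q = (case (p, q) of
      (Inl i, Inl j) \<Rightarrow> A i j
    | (Inl i, Inr j) \<Rightarrow> S i j
    | (Inr i, Inl j) \<Rightarrow> cnj (S i j)
    | (Inr i, Inr j) \<Rightarrow> cnj (A i j))"

definition Sqz :: "(('m::finite + 'm) \<Rightarrow> ('m + 'm) \<Rightarrow> complex) set" where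
  "Sqz = {sqz_block A S | A S. (\<forall>i j. A i j = - cnj (A j i)) \<and> (\<forall>i j. S i j = S j i)}"

definition s_op :: "(('m::finite + 'm) \<Rightarrow> ('m + 'm) \<Rightarrow> complex) \<Rightarrow> (real^'m \<Rightarrow> complex) \<Rightarrow> real^'m \<Rightarrow> complex" where
  "s_op \<eta> f = (\<lambda>x. \<Sum>i\<in>UNIV. \<Sum>j\<in>UNIV.
       \<eta> (Inl i) (Inl j) * a_adj i (a_op j f) x
     + (1/2) * \<eta> (Inl i) (Inr j) * a_adj i (a_adj j f) x
     - (1/2) * cnj (\<eta> (Inl i) (Inr j)) * a_op i (a_op j f) x)"

definition avec :: "('m::finite + 'm) \<Rightarrow> (real^'m \<Rightarrow> complex) \<Rightarrow> real^'m \<Rightarrow> complex" where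
  "avec p = (case p of Inl i \<Rightarrow> a_op i | Inr i \<Rightarrow> a_adj i)"

end

theory Submission imports Defs begin

lemma vd_line:
  assumes "(g has_derivative G) (at (y + s *\<^sub>R u))"
  shows "((\<lambda>t. g (y + t *\<^sub>R u)) has_vector_derivative G u) (at s)"
proof -
  have lin: "linear G" using assms has_derivative_linear by blast
  have "((\<lambda>t. y + t *\<^sub>R u) has_derivative (\<lambda>t. t *\<^sub>R u)) (at s)"
    by (auto intro!: derivative_eq_intros)
  from has_derivative_compose[OF this assms]
  have "((\<lambda>t. g (y + t *\<^sub>R u)) has_derivative (\<lambda>t. G (t *\<^sub>R u))) (at s)" .
  moreover have "(\<lambda>t. G (t *\<^sub>R u)) = (\<lambda>t. t *\<^sub>R G u)"
    using lin by (simp add: linear_scale)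
  ultimately show ?thesis by (simp add: has_vector_derivative_def)
qed

lemma partial_eq:
  assumes "(g has_derivative G) (at x)"
  shows "partial i g x = G (axis i 1)"
  unfolding partial_def
  by (rule vector_derivative_at, rule vd_line) (use assms in simp)

lemma partial_hd:
  assumes "g differentiable (at x)"
  shows "partial i g x = frechet_derivative g (at x) (axis i 1)"
  using assms partial_eq frechet_derivative_works by blast

lemma partial_add:
  assumes "g differentiable (at x)" "h differentiable (at x)"
  shows "partial i (\<lambda>y. g y + h y) x = partial i g x + partial i h x"
proof -
  obtain G H where "(g has_derivative G) (at x)" "(h has_derivative H) (at x)"
    using assms unfolding differentiable_def by blast
  then show ?thesis using partial_eq[OF has_derivative_add, of g G x h H i] partial_eq[of g G x i] partial_eq[of h H x i] by simp
qed

lemma partial_diff: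
  assumes "g differentiable (at x)" "h differentiable (at x)"
  shows "partial i (\<lambda>y. g y - h y) x = partial i g x - partial i h x"
proof -
  obtain G H where "(g has_derivative G) (at x)" "(h has_derivative H) (at x)"
    using assms unfolding differentiable_def by blast
  then show ?thesis using partial_eq[OF has_derivative_diff, of g G x h H i] partial_eq[of g G x i] partial_eq[of h H x i] by simp
qed

lemma partial_cmult:
  assumes "g differentiable (at x)"
  shows "partial i (\<lambda>y. c * g y) x = c * partial i g x"
proof -
  obtain G where G: "(g has_derivative G) (at x)"
    using assms unfolding differentiable_def by blast
  have "((\<lambda>y. c * g y) has_derivative (\<lambda>h. c * G h)) (at x)"
    using G by (auto intro!: derivative_eq_intros)
  then show ?thesis using partial_eq G by metis
qed

lemma partial_div:
  assumes "g differentiable (at x)"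
  shows "partial i (\<lambda>y. g y / c) x = partial i g x / c"
  using partial_cmult[OF assms, of i "inverse c"] by (simp add: field_simps)

lemma partial_qmul:
  assumes "g differentiable (at x)"
  shows "partial i (\<lambda>y. complex_of_real (y $ k) * g y) x
       = (if i = k then g x else 0) + complex_of_real (x $ k) * partial i g x"
proof -
  obtain G where G: "(g has_derivative G) (at x)"
    using assms unfolding differentiable_def by blast
  have "((\<lambda>y. y $ k) has_derivative (\<lambda>h. h $ k)) (at x)"
    by (rule bounded_linear.has_derivative[OF bounded_linear_vec_nth]) (rule has_derivative_ident)
  then have "((\<lambda>y. complex_of_real (y $ k)) has_derivative (\<lambda>h. complex_of_real (h $ k))) (at x)"
    by (rule bounded_linear.has_derivative[OF bounded_linear_of_real])
  from has_derivative_mult[OF this G] have D: "((\<lambda>y. complex_of_real (y $ k) * g y) has_derivative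
     (\<lambda>h. complex_of_real (x $ k) * G h + complex_of_real (h $ k) * g x)) (at x)" .
  have ax: "axis i (1::real) $ k = (if i = k then 1 else 0)" by (simp add: axis_def)
  have e1: "partial i (\<lambda>y. complex_of_real (y $ k) * g y) x = complex_of_real (x $ k) * G (axis i 1) + complex_of_real (axis i 1 $ k) * g x"
    by (rule partial_eq[OF D])
  have e2: "partial i g x = G (axis i 1)" by (rule partial_eq[OF G])
  show ?thesis unfolding e1 e2 ax by simp
qed


lemma vd_line2:
  assumes "\<And>z. g differentiable (at z)"
  shows "((\<lambda>t. g (y + t *\<^sub>R axis i 1)) has_vector_derivative partial i g (y + s *\<^sub>R axis i 1)) (at s)"
proof -
  obtain G where G: "(g has_derivative G) (at (y + s *\<^sub>R axis i 1))"
    using assms unfolding differentiable_def by blast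
  show ?thesis using vd_line[OF G] partial_eq[OF G, of i] by simp
qed

lemma key_bound:
  fixes g :: "real^'m::finite \<Rightarrow> complex" and x w :: "real^'m"
  assumes gd: "\<And>z. g differentiable (at z)"
    and L: "linear L"
    and e: "e > 0" and d: "d > 0"
    and approx: "\<And>y. norm (y - x) < d \<Longrightarrow> norm (partial i g y - partial i g x - L (y - x)) \<le> e * norm (y - x)"
    and h: "0 < h" "2 * h < d"
    and w: "norm w = 1"
  shows "norm (g (x + h *\<^sub>R w + h *\<^sub>R axis i 1) - g (x + h *\<^sub>R axis i 1) - g (x + h *\<^sub>R w) + g x
              - complex_of_real (h * h) * L w) \<le> 9 * e * (h * h)"
proof -
  define u :: "real^'m" where "u = axis i 1"
  have nu: "norm u = 1" by (simp add: u_def)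
  define P where "P = partial i g"
  define f where "f = (\<lambda>t. g ((x + h *\<^sub>R w) + t *\<^sub>R u) - g (x + t *\<^sub>R u))"
  define f' where "f' = (\<lambda>t. P ((x + h *\<^sub>R w) + t *\<^sub>R u) - P (x + t *\<^sub>R u))"
  have fd: "(f has_vector_derivative f' t) (at t within {0..h})" for t
    unfolding f_def f'_def P_def u_def
    by (rule has_vector_derivative_at_within, rule has_vector_derivative_diff)
       (rule vd_line2[OF gd])+
  have b1: "norm (f' t - complex_of_real h * L w) \<le> 3 * e * h" if t: "t \<in> {0..h}" for t
  proof -
    have t0: "0 \<le> t" "t \<le> h" using t by auto
    have n1: "norm (h *\<^sub>R w + t *\<^sub>R u) \<le> 2 * h"
    proof -
      have "norm (h *\<^sub>R w + t *\<^sub>R u) \<le> norm (h *\<^sub>R w) + norm (t *\<^sub>R u)" by (rule norm_triangle_ineq)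
      also have "\<dots> = h + t" using w nu h t0 by simp
      finally show ?thesis using t0 by simp
    qed
    have n2: "norm (t *\<^sub>R u) = t" using nu t0 by simp
    have A1: "norm (P (x + h *\<^sub>R w + t *\<^sub>R u) - P x - L (h *\<^sub>R w + t *\<^sub>R u)) \<le> e * (2 * h)"
    proof -
      have "norm (P (x + h *\<^sub>R w + t *\<^sub>R u) - P x - L (h *\<^sub>R w + t *\<^sub>R u)) \<le> e * norm (h *\<^sub>R w + t *\<^sub>R u)"
        using approx[of "x + h *\<^sub>R w + t *\<^sub>R u"] n1 h unfolding P_def by (simp add: add.assoc)
      also have "\<dots> \<le> e * (2 * h)" using n1 e by simp
      finally show ?thesis .
    qed
    have A2: "norm (P (x + t *\<^sub>R u) - P x - L (t *\<^sub>R u)) \<le> e * h"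
    proof -
      have "norm (P (x + t *\<^sub>R u) - P x - L (t *\<^sub>R u)) \<le> e * norm (t *\<^sub>R u)"
        using approx[of "x + t *\<^sub>R u"] nu h t0 unfolding P_def by simp
      also have "\<dots> \<le> e * h" using nu e t0 by simp
      finally show ?thesis .
    qed
    have lin: "L (h *\<^sub>R w + t *\<^sub>R u) - L (t *\<^sub>R u) = complex_of_real h * L w"
      by (simp only: linear_add[OF L] linear_scale[OF L]) (simp add: scaleR_conv_of_real)
    have "f' t - complex_of_real h * L w
       = (P (x + h *\<^sub>R w + t *\<^sub>R u) - P x - L (h *\<^sub>R w + t *\<^sub>R u))
         - (P (x + t *\<^sub>R u) - P x - L (t *\<^sub>R u))"
      unfolding f'_def lin[symmetric] by (simp add: algebra_simps)
    also have "norm \<dots> \<le> norm (P (x + h *\<^sub>R w + t *\<^sub>R u) - P x - L (h *\<^sub>R w + t *\<^sub>R u))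
         + norm (P (x + t *\<^sub>R u) - P x - L (t *\<^sub>R u))"
      by (rule norm_triangle_ineq4)
    also have "\<dots> \<le> e * (2 * h) + e * h"
      using A1 A2 by (rule add_mono)
    finally show ?thesis by (simp add: algebra_simps)
  qed
  have b2: "norm (f' t - f' 0) \<le> 6 * e * h" if t: "t \<in> {0..h}" for t
  proof -
    have "norm (f' t - f' 0) \<le> norm (f' t - complex_of_real h * L w) + norm (f' 0 - complex_of_real h * L w)"
      using norm_triangle_ineq4[of "f' t - complex_of_real h * L w" "f' 0 - complex_of_real h * L w"]
      by (simp add: algebra_simps)
    also have "\<dots> \<le> 3 * e * h + 3 * e * h" using b1[OF t] b1[of 0] h by (intro add_mono) auto
    finally show ?thesis by simp
  qed
  have seg: "closed_segment 0 h \<subseteq> {0..h}" using h by (simp add: closed_segment_eq_real_ivl)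
  have M: "norm (f h - f 0 - (h - 0) *\<^sub>R f' 0) \<le> norm (h - 0) * (6 * e * h)"
    by (rule vector_differentiable_bound_linearization[OF fd seg b2]) (use h in auto)
  have M2: "norm (h *\<^sub>R f' 0 - complex_of_real (h * h) * L w) \<le> h * (3 * e * h)"
  proof -
    have "h *\<^sub>R f' 0 - complex_of_real (h * h) * L w = complex_of_real h * (f' 0 - complex_of_real h * L w)"
      by (simp add: scaleR_conv_of_real algebra_simps)
    then have "norm (h *\<^sub>R f' 0 - complex_of_real (h * h) * L w) = h * norm (f' 0 - complex_of_real h * L w)"
      using h by (simp add: norm_mult)
    also have "\<dots> \<le> h * (3 * e * h)" using b1[of 0] h by (intro mult_left_mono) auto
    finally show ?thesis .
  qed
  have eqf: "f h - f 0 = g (x + h *\<^sub>R w + h *\<^sub>R axis i 1) - g (x + h *\<^sub>R axis i 1) - g (x + h *\<^sub>R w) + g x"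
    unfolding f_def u_def by simp
  have "norm (f h - f 0 - complex_of_real (h * h) * L w)
      = norm ((f h - f 0 - h *\<^sub>R f' 0) + (h *\<^sub>R f' 0 - complex_of_real (h * h) * L w))"
    by (rule arg_cong[where f=norm]) simp
  also have "\<dots> \<le> norm (f h - f 0 - h *\<^sub>R f' 0) + norm (h *\<^sub>R f' 0 - complex_of_real (h * h) * L w)"
    by (rule norm_triangle_ineq)
  also have "\<dots> \<le> h * (6 * e * h) + h * (3 * e * h)" using M M2 h by (intro add_mono) auto
  finally show ?thesis unfolding eqf by (simp add: algebra_simps)
qed


lemma clairaut:
  fixes g :: "real^'m::finite \<Rightarrow> complex"
  assumes gd: "\<And>z. g differentiable (at z)"
    and di: "\<And>z. partial i g differentiable (at z)"
    and dj: "\<And>z. partial j g differentiable (at z)"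
  shows "partial j (partial i g) x = partial i (partial j g) x"
proof -
  obtain Li where Li: "(partial i g has_derivative Li) (at x)"
    using di unfolding differentiable_def by blast
  obtain Lj where Lj: "(partial j g has_derivative Lj) (at x)"
    using dj unfolding differentiable_def by blast
  have linI: "linear Li" using Li has_derivative_linear by blast
  have linJ: "linear Lj" using Lj has_derivative_linear by blast
  define u :: "real^'m" where "u = axis i 1"
  define w :: "real^'m" where "w = axis j 1"
  have nw: "norm w = 1" unfolding w_def by (rule norm_axis_1)
  have nu: "norm u = 1" unfolding u_def by (rule norm_axis_1)
  have c1: "partial j (partial i g) x = Li w" unfolding w_def by (rule partial_eq[OF Li])
  have c2: "partial i (partial j g) x = Lj u" unfolding u_def by (rule partial_eq[OF Lj])
  have bnd: "norm (Li w - Lj u) \<le> 18 * e" if e: "e > 0" for e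
  proof -
    obtain d1 where d1: "d1 > 0" and A1: "\<And>y. norm (y - x) < d1 \<Longrightarrow>
        norm (partial i g y - partial i g x - Li (y - x)) \<le> e * norm (y - x)"
      using Li e unfolding has_derivative_at_alt by meson
    obtain d2 where d2: "d2 > 0" and A2: "\<And>y. norm (y - x) < d2 \<Longrightarrow>
        norm (partial j g y - partial j g x - Lj (y - x)) \<le> e * norm (y - x)"
      using Lj e unfolding has_derivative_at_alt by meson
    define h where "h = min d1 d2 / 3"
    have h: "0 < h" "2 * h < d1" "2 * h < d2" using d1 d2 by (auto simp: h_def)
    have K1: "norm (g (x + h *\<^sub>R w + h *\<^sub>R u) - g (x + h *\<^sub>R u) - g (x + h *\<^sub>R w) + g x
              - complex_of_real (h * h) * Li w) \<le> 9 * e * (h * h)"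
      unfolding u_def by (rule key_bound[OF gd linI e d1 A1 h(1) h(2) nw])
    have K2: "norm (g (x + h *\<^sub>R u + h *\<^sub>R w) - g (x + h *\<^sub>R w) - g (x + h *\<^sub>R u) + g x
              - complex_of_real (h * h) * Lj u) \<le> 9 * e * (h * h)"
      unfolding w_def by (rule key_bound[OF gd linJ e d2 A2 h(1) h(3) nu])
    define D where "D = g (x + h *\<^sub>R w + h *\<^sub>R u) - g (x + h *\<^sub>R u) - g (x + h *\<^sub>R w) + g x"
    have K1': "norm (D - complex_of_real (h * h) * Li w) \<le> 9 * e * (h * h)" using K1 by (simp add: D_def)
    have K2': "norm (D - complex_of_real (h * h) * Lj u) \<le> 9 * e * (h * h)"
    proof -
      have "D = g (x + h *\<^sub>R u + h *\<^sub>R w) - g (x + h *\<^sub>R w) - g (x + h *\<^sub>R u) + g x"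
        unfolding D_def by (simp add: add_ac)
      then show ?thesis using K2 by simp
    qed
    have "complex_of_real (h * h) * (Li w - Lj u)
        = (D - complex_of_real (h * h) * Lj u) - (D - complex_of_real (h * h) * Li w)"
      by (simp add: algebra_simps)
    then have "norm (complex_of_real (h * h) * (Li w - Lj u))
        \<le> norm (D - complex_of_real (h * h) * Lj u) + norm (D - complex_of_real (h * h) * Li w)"
      by (metis norm_triangle_ineq4)
    also have "\<dots> \<le> 9 * e * (h * h) + 9 * e * (h * h)" using K1' K2' by (rule add_mono[rotated])
    finally have F: "norm (complex_of_real (h * h) * (Li w - Lj u)) \<le> (h * h) * (18 * e)"
      by (simp only: mult_ac)
    have "norm (complex_of_real (h * h) * (Li w - Lj u)) = (h * h) * norm (Li w - Lj u)"
      unfolding norm_mult norm_of_real using h by simp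
    with F have "(h * h) * norm (Li w - Lj u) \<le> (h * h) * (18 * e)" by simp
    then show ?thesis using h by (simp add: mult_le_cancel_left)
  qed
  have "Li w - Lj u = 0"
  proof (rule ccontr)
    assume "Li w - Lj u \<noteq> 0"
    then have p: "norm (Li w - Lj u) > 0" by simp
    from bnd[of "norm (Li w - Lj u) / 36"] p show False by simp
  qed
  then show ?thesis using c1 c2 by simp
qed


inductive_set Cl :: "(real^'m::finite \<Rightarrow> complex) set \<Rightarrow> (real^'m \<Rightarrow> complex) set" for G where
  base: "g \<in> G \<Longrightarrow> iter_partial is g \<in> Cl G"
| add: "u \<in> Cl G \<Longrightarrow> v \<in> Cl G \<Longrightarrow> (\<lambda>x. u x + v x) \<in> Cl G"
| cmul: "u \<in> Cl G \<Longrightarrow> (\<lambda>x. c * u x) \<in> Cl G"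
| qmul: "u \<in> Cl G \<Longrightarrow> (\<lambda>x. complex_of_real (x $ k) * u x) \<in> Cl G"

lemma qmul_differentiable:
  assumes "g differentiable (at x)"
  shows "(\<lambda>y. complex_of_real (y $ k) * g y) differentiable (at x)"
proof -
  obtain G where G: "(g has_derivative G) (at x)"
    using assms unfolding differentiable_def by blast
  have "((\<lambda>y. y $ k) has_derivative (\<lambda>h. h $ k)) (at x)"
    by (rule bounded_linear.has_derivative[OF bounded_linear_vec_nth]) (rule has_derivative_ident)
  then have "((\<lambda>y. complex_of_real (y $ k)) has_derivative (\<lambda>h. complex_of_real (h $ k))) (at x)"
    by (rule bounded_linear.has_derivative[OF bounded_linear_of_real])
  from has_derivative_mult[OF this G] show ?thesis unfolding differentiable_def by blast
qed

lemma Cl_diffble: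
  assumes G: "\<forall>g\<in>G. smooth_fun g" and u: "u \<in> Cl G"
  shows "u differentiable (at x)"
  using u
proof (induction arbitrary: x)
  case (base g "is")
  then show ?case using G unfolding smooth_fun_def by blast
next
  case (add u v)
  then show ?case by (simp add: differentiable_add)
next
  case (cmul u c)
  then show ?case by (simp add: differentiable_mult)
next
  case (qmul u k)
  then show ?case by (simp add: qmul_differentiable)
qed

lemma Cl_partial:
  assumes G: "\<forall>g\<in>G. smooth_fun g" and u: "u \<in> Cl G"
  shows "partial i u \<in> Cl G"
  using u
proof induction
  case (base g "is")
  have "partial i (iter_partial is g) = iter_partial (i # is) g" by simp
  then show ?case using Cl.base[OF base, of "i # is"] by simp
next
  case (add u v)
  have "partial i (\<lambda>x. u x + v x) = (\<lambda>x. partial i u x + partial i v x)"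
    by (rule ext, rule partial_add[OF Cl_diffble[OF G add(1)] Cl_diffble[OF G add(2)]])
  then show ?case using Cl.add[OF add(3) add(4)] by simp
next
  case (cmul u c)
  have "partial i (\<lambda>x. c * u x) = (\<lambda>x. c * partial i u x)"
    by (rule ext, rule partial_cmult[OF Cl_diffble[OF G cmul(1)]])
  then show ?case using Cl.cmul[OF cmul(2)] by simp
next
  case (qmul u k)
  have "partial i (\<lambda>x. complex_of_real (x $ k) * u x) x
     = (if i = k then 1 else 0) * u x + complex_of_real (x $ k) * partial i u x" for x
    using partial_qmul[OF Cl_diffble[OF G qmul(1)], of i k x] by simp
  then have e: "partial i (\<lambda>x. complex_of_real (x $ k) * u x)
     = (\<lambda>x. (if i = k then 1 else 0) * u x + complex_of_real (x $ k) * partial i u x)"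
    by (rule ext)
  show ?case unfolding e by (rule Cl.add[OF Cl.cmul[OF qmul(1)] Cl.qmul[OF qmul(2)]])
qed

lemma Cl_iter:
  assumes G: "\<forall>g\<in>G. smooth_fun g" and u: "u \<in> Cl G"
  shows "iter_partial is u \<in> Cl G"
  by (induction "is") (auto simp: u Cl_partial[OF G])

lemma Cl_smooth:
  assumes G: "\<forall>g\<in>G. smooth_fun g" and u: "u \<in> Cl G"
  shows "smooth_fun u"
  unfolding smooth_fun_def using Cl_diffble[OF G Cl_iter[OF G u]] by blast

lemma in_Cl: "g \<in> G \<Longrightarrow> g \<in> Cl G"
  using Cl.base[of g G "[]"] by simp

lemma smooth_add: "smooth_fun u \<Longrightarrow> smooth_fun v \<Longrightarrow> smooth_fun (\<lambda>x. u x + v x)"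
  using Cl_smooth[of "{u, v}", OF _ Cl.add[OF in_Cl in_Cl]] by auto

lemma smooth_cmul: "smooth_fun u \<Longrightarrow> smooth_fun (\<lambda>x. c * u x)"
  using Cl_smooth[of "{u}", OF _ Cl.cmul[OF in_Cl]] by auto

lemma smooth_qmul: "smooth_fun u \<Longrightarrow> smooth_fun (\<lambda>x. complex_of_real (x $ k) * u x)"
  using Cl_smooth[of "{u}", OF _ Cl.qmul[OF in_Cl]] by auto

lemma smooth_partial: "smooth_fun u \<Longrightarrow> smooth_fun (partial i u)"
proof -
  assume u: "smooth_fun u"
  then have G: "\<forall>g\<in>{u}. smooth_fun g" by simp
  show ?thesis by (rule Cl_smooth[OF G Cl_partial[OF G in_Cl]]) simp
qed

lemma smooth_diffble: "smooth_fun u \<Longrightarrow> u differentiable (at x)"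
  unfolding smooth_fun_def using iter_partial.simps(1) by metis

lemma smooth_diff: "smooth_fun u \<Longrightarrow> smooth_fun v \<Longrightarrow> smooth_fun (\<lambda>x. u x - v x)"
  using smooth_add[of u "\<lambda>x. (-1) * v x"] smooth_cmul[of v "-1"] by simp

lemma smooth_div: "smooth_fun u \<Longrightarrow> smooth_fun (\<lambda>x. u x / c)"
  using smooth_cmul[of u "inverse c"] by (simp add: field_simps)

lemma smooth_zero: "smooth_fun (\<lambda>x::real^'m::finite. 0::complex)"
proof -
  have z: "partial i (\<lambda>x::real^'m. 0::complex) = (\<lambda>x. 0)" for i
    using partial_eq[OF has_derivative_const[of "0::complex" "at x" for x], of i] by (simp add: fun_eq_iff)
  have "iter_partial is (\<lambda>x::real^'m. 0::complex) = (\<lambda>x. 0)" for "is"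
    by (induction "is") (simp_all add: z)
  then show ?thesis unfolding smooth_fun_def by simp
qed

lemma smooth_sum:
  assumes "finite I" "\<And>i. i \<in> I \<Longrightarrow> smooth_fun (F i)"
  shows "smooth_fun (\<lambda>x. \<Sum>i\<in>I. F i x)"
  using assms by (induction I rule: finite_induct) (auto simp: smooth_zero smooth_add)


lemma partial_zero: "partial i (\<lambda>x::real^'m::finite. 0::complex) = (\<lambda>x. 0)"
  using partial_eq[OF has_derivative_const[of "0::complex" "at x" for x], of i] by (simp add: fun_eq_iff)

definition Lop :: "complex \<Rightarrow> 'm::finite \<Rightarrow> (real^'m \<Rightarrow> complex) \<Rightarrow> real^'m \<Rightarrow> complex" where
  "Lop c k g = (\<lambda>x. (complex_of_real (x $ k) * g x + c * partial k g x) / complex_of_real (sqrt 2))"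

lemma a_op_Lop: "a_op k = Lop 1 k"
  by (simp add: fun_eq_iff a_op_def q_op_def p_op_def Lop_def algebra_simps)

lemma a_adj_Lop: "a_adj k = Lop (-1) k"
  by (simp add: fun_eq_iff a_adj_def q_op_def p_op_def Lop_def algebra_simps)

lemma smooth_Lop: "smooth_fun g \<Longrightarrow> smooth_fun (Lop c k g)"
  unfolding Lop_def
  by (intro smooth_div smooth_add smooth_qmul smooth_cmul smooth_partial)

lemma Lop_add:
  assumes "smooth_fun u" "smooth_fun v"
  shows "Lop c k (\<lambda>x. u x + v x) = (\<lambda>x. Lop c k u x + Lop c k v x)"
  unfolding Lop_def fun_eq_iff
  using partial_add[OF smooth_diffble[OF assms(1)] smooth_diffble[OF assms(2)]]
  by (simp add: algebra_simps add_divide_distrib)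

lemma Lop_diff:
  assumes "smooth_fun u" "smooth_fun v"
  shows "Lop c k (\<lambda>x. u x - v x) = (\<lambda>x. Lop c k u x - Lop c k v x)"
  unfolding Lop_def fun_eq_iff partial_diff[OF smooth_diffble[OF assms(1)] smooth_diffble[OF assms(2)]]
  by (simp add: algebra_simps diff_divide_distrib)

lemma Lop_cmul:
  assumes "smooth_fun u"
  shows "Lop c k (\<lambda>x. d * u x) = (\<lambda>x. d * Lop c k u x)"
  unfolding Lop_def fun_eq_iff
  using partial_cmult[OF smooth_diffble[OF assms(1)]]
  by (simp add: algebra_simps)

lemma Lop_zero: "Lop c k (\<lambda>x. 0) = (\<lambda>x. 0)"
  unfolding Lop_def partial_zero by simp

lemma Lop_sum:
  assumes "finite I" "\<And>i. i \<in> I \<Longrightarrow> smooth_fun (F i)"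
  shows "Lop c k (\<lambda>x. \<Sum>i\<in>I. F i x) = (\<lambda>x. \<Sum>i\<in>I. Lop c k (F i) x)"
  using assms
proof (induction I rule: finite_induct)
  case empty
  then show ?case by (simp add: Lop_zero)
next
  case (insert a I)
  have s: "smooth_fun (\<lambda>x. \<Sum>i\<in>I. F i x)" using insert by (intro smooth_sum) auto
  have "Lop c k (\<lambda>x. \<Sum>i\<in>insert a I. F i x) = Lop c k (\<lambda>x. F a x + (\<Sum>i\<in>I. F i x))"
    using insert by simp
  also have "\<dots> = (\<lambda>x. Lop c k (F a) x + Lop c k (\<lambda>x. \<Sum>i\<in>I. F i x) x)"
    using Lop_add[of "F a" "\<lambda>x. \<Sum>i\<in>I. F i x"] insert s by simp
  also have "\<dots> = (\<lambda>x. \<Sum>i\<in>insert a I. Lop c k (F i) x)"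
    using insert by simp
  finally show ?case .
qed

lemma partial_Lop:
  assumes g: "smooth_fun g"
  shows "partial k (Lop d i g) x = ((if k = i then g x else 0) + complex_of_real (x $ i) * partial k g x
            + d * partial k (partial i g) x) / complex_of_real (sqrt 2)"
proof -
  have s1: "smooth_fun (\<lambda>y. complex_of_real (y $ i) * g y)" by (rule smooth_qmul[OF g])
  have s2: "smooth_fun (\<lambda>y. d * partial i g y)" by (rule smooth_cmul[OF smooth_partial[OF g]])
  have s3: "smooth_fun (\<lambda>y. complex_of_real (y $ i) * g y + d * partial i g y)" by (rule smooth_add[OF s1 s2])
  show ?thesis
    unfolding Lop_def
    by (simp add: partial_div[OF smooth_diffble[OF s3]] partial_add[OF smooth_diffble[OF s1] smooth_diffble[OF s2]]
        partial_qmul[OF smooth_diffble[OF g]] partial_cmult[OF smooth_diffble[OF smooth_partial[OF g]]])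
qed

lemma sqrt2c: "complex_of_real (sqrt 2) * complex_of_real (sqrt 2) = 2"
  by (simp flip: of_real_mult)

lemma Lop_comm:
  assumes g: "smooth_fun g"
  shows "Lop c k (Lop d i g) x = Lop d i (Lop c k g) x + (c - d) / 2 * (if k = i then g x else 0)"
proof -
  have cl: "partial k (partial i g) x = partial i (partial k g) x"
    by (rule clairaut[symmetric]) (use g smooth_diffble smooth_partial in blast)+
  have ne: "complex_of_real (sqrt 2) \<noteq> 0" by simp
  show ?thesis
    unfolding Lop_def[of c k "Lop d i g"] Lop_def[of d i "Lop c k g"] partial_Lop[OF g]
    unfolding Lop_def cl
    using ne sqrt2c by (cases "k = i") (simp_all add: field_simps)
qed


lemma Lop_comm_fun:
  assumes g: "smooth_fun g"
  shows "Lop c k (Lop e j g) = (\<lambda>y. Lop e j (Lop c k g) y + ((c - e) / 2 * (if k = j then 1 else 0)) * g y)"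
  by (rule ext, subst Lop_comm[OF g]) simp

lemma triple:
  assumes f: "smooth_fun f"
  shows "Lop c k (Lop d i (Lop e j f)) x - Lop d i (Lop e j (Lop c k f)) x
       = (c - e) / 2 * (if k = j then 1 else 0) * Lop d i f x + (c - d) / 2 * (if k = i then 1 else 0) * Lop e j f x"
proof -
  have s1: "smooth_fun (Lop e j (Lop c k f))" by (intro smooth_Lop f)
  have s2: "smooth_fun (\<lambda>y. ((c - e) / 2 * (if k = j then 1 else 0)) * f y)" by (intro smooth_cmul f)
  have eq1: "Lop c k (Lop d i (Lop e j f)) x = Lop d i (Lop c k (Lop e j f)) x + (c - d) / 2 * (if k = i then Lop e j f x else 0)"
    by (rule Lop_comm) (intro smooth_Lop f)
  have eq2: "Lop d i (Lop c k (Lop e j f)) x = Lop d i (Lop e j (Lop c k f)) x + ((c - e) / 2 * (if k = j then 1 else 0)) * Lop d i f x"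
    unfolding Lop_comm_fun[OF f, of c k e j] Lop_add[OF s1 s2] Lop_cmul[OF f] by simp
  show ?thesis unfolding eq1 eq2 by (cases "k = i"; cases "k = j") (simp_all add: field_simps)
qed

lemma s_op_Lop: "s_op \<eta> f = (\<lambda>x. \<Sum>i\<in>UNIV. \<Sum>j\<in>UNIV.
       \<eta> (Inl i) (Inl j) * Lop (-1) i (Lop 1 j f) x
     + (1/2) * \<eta> (Inl i) (Inr j) * Lop (-1) i (Lop (-1) j f) x
     - (1/2) * cnj (\<eta> (Inl i) (Inr j)) * Lop 1 i (Lop 1 j f) x)"
  unfolding s_op_def a_op_Lop a_adj_Lop ..

lemma abs3:
  fixes a b d X Y Z X' Y' Z' :: complex
  shows "a * X + b * Y - d * Z - (a * X' + b * Y' - d * Z') = a * (X - X') + b * (Y - Y') - d * (Z - Z')"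
  by (simp add: algebra_simps)

lemma comm_general:
  fixes \<eta> :: "('m::finite + 'm) \<Rightarrow> ('m + 'm) \<Rightarrow> complex"
  assumes f: "smooth_fun f"
  shows "Lop c k (s_op \<eta> f) x - s_op \<eta> (Lop c k f) x
    = (\<Sum>i\<in>UNIV. \<Sum>j\<in>UNIV.
       \<eta> (Inl i) (Inl j) * ((c - 1) / 2 * (if k = j then 1 else 0) * Lop (-1) i f x + (c + 1) / 2 * (if k = i then 1 else 0) * Lop 1 j f x)
     + (1/2) * \<eta> (Inl i) (Inr j) * ((c + 1) / 2 * (if k = j then 1 else 0) * Lop (-1) i f x + (c + 1) / 2 * (if k = i then 1 else 0) * Lop (-1) j f x)
     - (1/2) * cnj (\<eta> (Inl i) (Inr j)) * ((c - 1) / 2 * (if k = j then 1 else 0) * Lop 1 i f x + (c - 1) / 2 * (if k = i then 1 else 0) * Lop 1 j f x))"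
  (is "_ = ?R")
proof -
  define T where "T = (\<lambda>g i j x.
       \<eta> (Inl i) (Inl j) * Lop (-1) i (Lop 1 j g) x
     + (1/2) * \<eta> (Inl i) (Inr j) * Lop (-1) i (Lop (-1) j g) x
     - (1/2) * cnj (\<eta> (Inl i) (Inr j)) * Lop 1 i (Lop 1 j g) x)"
  have sT: "smooth_fun (T g i j)" if "smooth_fun g" for g i j
    unfolding T_def using that by (intro smooth_add smooth_diff smooth_cmul smooth_Lop)
  have sT2: "smooth_fun (\<lambda>x. \<Sum>j\<in>UNIV. T g i j x)" if "smooth_fun g" for g i
    by (intro smooth_sum sT that) auto
  have s_eq: "s_op \<eta> g = (\<lambda>x. \<Sum>i\<in>UNIV. \<Sum>j\<in>UNIV. T g i j x)" for g
    unfolding s_op_Lop T_def ..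
  have LT: "Lop c k (T f i j) x =
       \<eta> (Inl i) (Inl j) * Lop c k (Lop (-1) i (Lop 1 j f)) x
     + (1/2) * \<eta> (Inl i) (Inr j) * Lop c k (Lop (-1) i (Lop (-1) j f)) x
     - (1/2) * cnj (\<eta> (Inl i) (Inr j)) * Lop c k (Lop 1 i (Lop 1 j f)) x" for i j
  proof -
    have a1: "smooth_fun (\<lambda>x. \<eta> (Inl i) (Inl j) * Lop (-1) i (Lop 1 j f) x)" by (intro smooth_cmul smooth_Lop f)
    have a2: "smooth_fun (\<lambda>x. (1/2) * \<eta> (Inl i) (Inr j) * Lop (-1) i (Lop (-1) j f) x)" by (intro smooth_cmul smooth_Lop f)
    have a3: "smooth_fun (\<lambda>x. (1/2) * cnj (\<eta> (Inl i) (Inr j)) * Lop 1 i (Lop 1 j f) x)" by (intro smooth_cmul smooth_Lop f)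
    show ?thesis unfolding T_def Lop_diff[OF smooth_add[OF a1 a2] a3] Lop_add[OF a1 a2]
      Lop_cmul[OF smooth_Lop[OF smooth_Lop[OF f]]] by simp
  qed
  have L1: "Lop c k (\<lambda>x. \<Sum>i\<in>UNIV. \<Sum>j\<in>UNIV. T f i j x) = (\<lambda>x. \<Sum>i\<in>UNIV. Lop c k (\<lambda>x. \<Sum>j\<in>UNIV. T f i j x) x)"
    by (rule Lop_sum) (simp_all add: sT2 f)
  have L2: "Lop c k (\<lambda>x. \<Sum>j\<in>UNIV. T f i j x) = (\<lambda>x. \<Sum>j\<in>UNIV. Lop c k (T f i j) x)" for i
    by (rule Lop_sum) (simp_all add: sT f)
  have "Lop c k (s_op \<eta> f) x = (\<Sum>i\<in>UNIV. \<Sum>j\<in>UNIV. Lop c k (T f i j) x)"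
    unfolding s_eq[of f] L1 L2 ..
  moreover have "s_op \<eta> (Lop c k f) x = (\<Sum>i\<in>UNIV. \<Sum>j\<in>UNIV. T (Lop c k f) i j x)"
    unfolding s_eq ..
  ultimately have "Lop c k (s_op \<eta> f) x - s_op \<eta> (Lop c k f) x
      = (\<Sum>i\<in>UNIV. \<Sum>j\<in>UNIV. Lop c k (T f i j) x - T (Lop c k f) i j x)"
    by (simp add: sum_subtractf)
  also have "\<dots> = (\<Sum>i\<in>UNIV. \<Sum>j\<in>UNIV.
       \<eta> (Inl i) (Inl j) * (Lop c k (Lop (-1) i (Lop 1 j f)) x - Lop (-1) i (Lop 1 j (Lop c k f)) x)
     + (1/2) * \<eta> (Inl i) (Inr j) * (Lop c k (Lop (-1) i (Lop (-1) j f)) x - Lop (-1) i (Lop (-1) j (Lop c k f)) x)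
     - (1/2) * cnj (\<eta> (Inl i) (Inr j)) * (Lop c k (Lop 1 i (Lop 1 j f)) x - Lop 1 i (Lop 1 j (Lop c k f)) x))"
  proof (intro sum.cong refl)
    fix i j
    show "Lop c k (T f i j) x - T (Lop c k f) i j x =
       \<eta> (Inl i) (Inl j) * (Lop c k (Lop (-1) i (Lop 1 j f)) x - Lop (-1) i (Lop 1 j (Lop c k f)) x)
     + (1/2) * \<eta> (Inl i) (Inr j) * (Lop c k (Lop (-1) i (Lop (-1) j f)) x - Lop (-1) i (Lop (-1) j (Lop c k f)) x)
     - (1/2) * cnj (\<eta> (Inl i) (Inr j)) * (Lop c k (Lop 1 i (Lop 1 j f)) x - Lop 1 i (Lop 1 j (Lop c k f)) x)"
      unfolding LT unfolding T_def by (rule abs3)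
  qed
  also have "\<dots> = ?R"
    by (intro sum.cong refl) (simp only: triple[OF f] diff_minus_eq_add)
  finally show ?thesis .
qed


lemma delta_sums:
  fixes G H :: "'m::finite \<Rightarrow> 'm \<Rightarrow> complex"
  shows "(\<Sum>i\<in>UNIV. \<Sum>j\<in>UNIV. (if k = i then 1 else 0) * G i j + (if k = j then 1 else 0) * H i j)
       = (\<Sum>j\<in>UNIV. G k j) + (\<Sum>i\<in>UNIV. H i k)"
proof -
  have d: "\<And>a (X::complex). (if k = a then 1 else 0) * X = (if k = a then X else 0)" by simp
  have d2: "\<And>P (X::'m \<Rightarrow> complex). (\<Sum>j\<in>UNIV. if P then X j else 0) = (if P then (\<Sum>j\<in>UNIV. X j) else 0)" by simp
  have "(\<Sum>i\<in>UNIV. \<Sum>j\<in>UNIV. (if k = i then 1 else 0) * G i j + (if k = j then 1 else 0) * H i j)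
     = (\<Sum>i\<in>UNIV. \<Sum>j\<in>UNIV. (if k = i then 1 else 0) * G i j) + (\<Sum>i\<in>UNIV. \<Sum>j\<in>UNIV. (if k = j then 1 else 0) * H i j)"
    by (simp add: sum.distrib)
  also have "(\<Sum>i\<in>UNIV. \<Sum>j\<in>UNIV. (if k = i then 1 else 0) * G i j) = (\<Sum>j\<in>UNIV. G k j)"
    by (simp only: d d2) simp
  also have "(\<Sum>i\<in>UNIV. \<Sum>j\<in>UNIV. (if k = j then 1 else 0) * H i j) = (\<Sum>i\<in>UNIV. H i k)"
    by (simp only: d) simp
  finally show ?thesis .
qed

lemma sum_UNIV_Plus:
  fixes F :: "('m::finite + 'm) \<Rightarrow> complex"
  shows "(\<Sum>q\<in>UNIV. F q) = (\<Sum>j\<in>UNIV. F (Inl j)) + (\<Sum>j\<in>UNIV. F (Inr j))"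
  using sum.Plus[of "UNIV :: 'm set" "UNIV :: 'm set" F] by (simp add: comp_def)

theorem lemma1:
  fixes \<eta> :: "('m::finite + 'm) \<Rightarrow> ('m + 'm) \<Rightarrow> complex"
    and f :: "real^'m \<Rightarrow> complex"
    and p :: "'m + 'm"
  assumes "\<eta> \<in> Sqz"
    and "smooth_fun f"
  shows "(\<lambda>x. avec p (s_op \<eta> f) x - s_op \<eta> (avec p f) x)
           = (\<lambda>x. \<Sum>q\<in>UNIV. \<eta> p q * avec q f x)"
proof
  fix x
  obtain A S where eta: "\<eta> = sqz_block A S" and aA: "\<And>i j. A i j = - cnj (A j i)" and sS: "\<And>i j. S i j = S j i"
    using assms(1) unfolding Sqz_def by blast
  have e1: "\<eta> (Inl i) (Inl j) = A i j" "\<eta> (Inl i) (Inr j) = S i j"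
    "\<eta> (Inr i) (Inl j) = cnj (S i j)" "\<eta> (Inr i) (Inr j) = cnj (A i j)" for i j
    unfolding eta sqz_block_def by simp_all
  show "avec p (s_op \<eta> f) x - s_op \<eta> (avec p f) x = (\<Sum>q\<in>UNIV. \<eta> p q * avec q f x)"
  proof (cases p)
    case (Inl k)
    have av: "avec p = Lop 1 k" using Inl by (simp add: avec_def a_op_Lop)
    have "avec p (s_op \<eta> f) x - s_op \<eta> (avec p f) x
      = (\<Sum>i\<in>UNIV. \<Sum>j\<in>UNIV. (if k = i then 1 else 0) * (A i j * Lop 1 j f x + 1/2 * S i j * Lop (-1) j f x)
            + (if k = j then 1 else 0) * (1/2 * S i j * Lop (-1) i f x))"
      unfolding av comm_general[OF assms(2)] e1
      by (intro sum.cong refl) (cases "k = i"; cases "k = j"; simp add: algebra_simps)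
    also have "\<dots> = (\<Sum>j\<in>UNIV. A k j * Lop 1 j f x + 1/2 * S k j * Lop (-1) j f x) + (\<Sum>i\<in>UNIV. 1/2 * S i k * Lop (-1) i f x)"
      by (rule delta_sums)
    also have "\<dots> = (\<Sum>j\<in>UNIV. A k j * Lop 1 j f x) + ((\<Sum>j\<in>UNIV. 1/2 * S k j * Lop (-1) j f x) + (\<Sum>j\<in>UNIV. 1/2 * S k j * Lop (-1) j f x))"
      using sS[of _ k] by (simp add: sum.distrib)
    also have "\<dots> = (\<Sum>j\<in>UNIV. A k j * Lop 1 j f x) + (\<Sum>j\<in>UNIV. S k j * Lop (-1) j f x)"
      by (simp only: sum.distrib[symmetric]) (simp add: field_simps)
    also have "\<dots> = (\<Sum>q\<in>UNIV. \<eta> p q * avec q f x)"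
      unfolding sum_UNIV_Plus Inl e1 by (simp add: avec_def a_op_Lop a_adj_Lop)
    finally show ?thesis .
  next
    case (Inr k)
    have av: "avec p = Lop (-1) k" using Inr by (simp add: avec_def a_adj_Lop)
    have "avec p (s_op \<eta> f) x - s_op \<eta> (avec p f) x
      = (\<Sum>i\<in>UNIV. \<Sum>j\<in>UNIV. (if k = i then 1 else 0) * (1/2 * cnj (S i j) * Lop 1 j f x)
            + (if k = j then 1 else 0) * (1/2 * cnj (S i j) * Lop 1 i f x - A i j * Lop (-1) i f x))"
      unfolding av comm_general[OF assms(2)] e1
      by (intro sum.cong refl) (cases "k = i"; cases "k = j"; simp add: algebra_simps)
    also have "\<dots> = (\<Sum>j\<in>UNIV. 1/2 * cnj (S k j) * Lop 1 j f x) + (\<Sum>i\<in>UNIV. 1/2 * cnj (S i k) * Lop 1 i f x - A i k * Lop (-1) i f x)"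
      by (rule delta_sums)
    also have "\<dots> = ((\<Sum>j\<in>UNIV. 1/2 * cnj (S k j) * Lop 1 j f x) + (\<Sum>j\<in>UNIV. 1/2 * cnj (S k j) * Lop 1 j f x)) + (\<Sum>j\<in>UNIV. cnj (A k j) * Lop (-1) j f x)"
      using sS[of _ k] aA[of _ k] by (simp add: sum.distrib sum_subtractf)
    also have "\<dots> = (\<Sum>j\<in>UNIV. cnj (S k j) * Lop 1 j f x) + (\<Sum>j\<in>UNIV. cnj (A k j) * Lop (-1) j f x)"
      by (simp only: sum.distrib[symmetric]) (simp add: field_simps)
    also have "\<dots> = (\<Sum>q\<in>UNIV. \<eta> p q * avec q f x)"
      unfolding sum_UNIV_Plus Inr e1 by (simp add: avec_def a_op_Lop a_adj_Lop)
    finally show ?thesis .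
  qed
qed

end
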